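(* Let $k\ge 2$ be even, let $\alpha_1,\dots,\alpha_k$ be positive integers with $n=\alpha_1+\cdots+\alpha_k$, let $G=C(\alpha_1,\dots,\alpha_k)$, and let $Q_L$ be the quotient matrix of its Laplacian with respect to the partition $\pi=\{\pi_1,\dots,\pi_k\}$. Then the eigenvalues of $Q_L$, listed as $\lambda_1\le\lambda_2\le\cdots\le\lambda_k$, are determined by $\lambda_1=0$, $\lambda_k=n$ and $$\lambda_i=\lambda_{i-1}+\alpha_{k-2(i-2)}\quad (i=2,3,\dots,\tfrac{k}{2}),\qquad \lambda_i=\lambda_{i+1}-\alpha_{2i-(k-1)}\quad (i=k-1,k-2,\dots,\tfrac{k}{2}+1).$$ (Explicitly, $\lambda_i=\alpha_k+\alpha_{k-2}+\cdots+\alpha_{k-2i+4}$ for $2\le i\le k/2$, and $\lambda_{k/2+i}=\sum_{l=1}^{k/2}\alpha_{2l}+\sum_{m=1}^{i}\alpha_{2m-1}$ for $1\le i\le k/2$.) Each of these is also a Laplacian eigenvalue of $G$.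
   Context: For positive integers $\alpha_1,\dots,\alpha_k$, the graph $C(\alpha_1,\dots,\alpha_k)$ is defined recursively by $C(\alpha_1)=\overline{K_{\alpha_1}}$ (the edgeless graph on $\alpha_1$ vertices) and $C(\alpha_1,\dots,\alpha_i)=\overline{C(\alpha_1,\dots,\alpha_{i-1})\cup K_{\alpha_i}}$ for $i=2,\dots,k$, where $\cup$ is disjoint union and the bar denotes graph complement. Let $\pi_i$ be the set of $\alpha_i$ vertices introduced at step $i$ (for $i=1$, the vertices of $C(\alpha_1)$). When $k$ is even (standing assumption), equivalently: $\pi_i$ induces a clique if $i$ is odd and an independent set if $i$ is even, and for $i<j$ a vertex of $\pi_i$ and a vertex of $\pi_j$ are adjacent iff $j$ is even. Such graphs (with $k$ even) are called $\mathcal{C}$-graphs. $L=D-A$ is the Laplacian matrix. The quotient matrix $Q_L$ is the $k\times k$ matrix with $(Q_L)_{ij}=\sum_{v\in\pi_j}L_{uv}$ for any $u\in\pi_i$ (this is independent of the choice of $u$). *)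

theory Defs
  imports "Jordan_Normal_Form.Matrix" "Jordan_Normal_Form.Char_Poly"
begin

(* Blocks pi_1..pi_k are 1-indexed; vertices are 0..n-1, with pi_i = [bstart i, bstart i + alpha i). *)
definition bstart :: "(nat \<Rightarrow> nat) \<Rightarrow> nat \<Rightarrow> nat" where
  "bstart \<alpha> i = (\<Sum>j\<in>{1..<i}. \<alpha> j)"

definition block :: "(nat \<Rightarrow> nat) \<Rightarrow> nat \<Rightarrow> nat set" where
  "block \<alpha> i = {bstart \<alpha> i ..< bstart \<alpha> i + \<alpha> i}"

definition nverts :: "(nat \<Rightarrow> nat) \<Rightarrow> nat \<Rightarrow> nat" where
  "nverts \<alpha> k = (\<Sum>i=1..k. \<alpha> i)"

definition part :: "(nat \<Rightarrow> nat) \<Rightarrow> nat \<Rightarrow> nat \<Rightarrow> nat" where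
  "part \<alpha> k v = (THE i. i \<in> {1..k} \<and> v \<in> block \<alpha> i)"

definition cadj :: "(nat \<Rightarrow> nat) \<Rightarrow> nat \<Rightarrow> nat \<Rightarrow> nat \<Rightarrow> bool" where
  "cadj \<alpha> k u v = (u \<noteq> v \<and>
     (if part \<alpha> k u = part \<alpha> k v then odd (part \<alpha> k u)
      else even (max (part \<alpha> k u) (part \<alpha> k v))))"

definition claplacian :: "(nat \<Rightarrow> nat) \<Rightarrow> nat \<Rightarrow> real mat" where
  "claplacian \<alpha> k = mat (nverts \<alpha> k) (nverts \<alpha> k) (\<lambda>(u,v).
     if u = v then real (card {w \<in> {0..<nverts \<alpha> k}. cadj \<alpha> k u w})
     else if cadj \<alpha> k u v then -1 else 0)"

(* quotient matrix Q_L; row/column index i (0-based) corresponds to block pi_(i+1);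
   the representative u of pi_(i+1) is its first vertex *)
definition cquot :: "(nat \<Rightarrow> nat) \<Rightarrow> nat \<Rightarrow> real mat" where
  "cquot \<alpha> k = mat k k (\<lambda>(i,j).
     \<Sum>v\<in>block \<alpha> (j+1). claplacian \<alpha> k $$ (bstart \<alpha> (i+1), v))"

definition clam :: "(nat \<Rightarrow> nat) \<Rightarrow> nat \<Rightarrow> nat \<Rightarrow> real" where
  "clam \<alpha> k i = (if i \<le> 1 then 0
     else if i \<le> k div 2 then (\<Sum>l=2..i. real (\<alpha> (k - 2*(l-2))))
     else (\<Sum>l=1..k div 2. real (\<alpha> (2*l))) + (\<Sum>m=1..i - k div 2. real (\<alpha> (2*m-1))))"

end

theory Submission
  imports Defs
begin

lemma bstart_Suc: "i \<ge> 1 \<Longrightarrow> bstart \<alpha> (Suc i) = bstart \<alpha> i + \<alpha> i"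
proof -
  assume "i \<ge> 1"
  then have "{1..<Suc i} = insert i {1..<i}" by auto
  then show ?thesis unfolding bstart_def by simp
qed

lemma bstart_mono: "i \<le> j \<Longrightarrow> bstart \<alpha> i \<le> bstart \<alpha> j"
  unfolding bstart_def by (rule sum_mono2) auto

lemma nverts_bstart: "nverts \<alpha> k = bstart \<alpha> (Suc k)"
  unfolding nverts_def bstart_def by (rule sum.cong) auto

lemma block_disj: "i \<ge> 1 \<Longrightarrow> j \<ge> 1 \<Longrightarrow> v \<in> block \<alpha> i \<Longrightarrow> v \<in> block \<alpha> j \<Longrightarrow> i = j"
proof (rule ccontr)
  assume a: "i \<ge> 1" "j \<ge> 1" "v \<in> block \<alpha> i" "v \<in> block \<alpha> j" "i \<noteq> j"
  { fix i j assume "i \<ge> 1" "i < j" "v \<in> block \<alpha> i" "v \<in> block \<alpha> j"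
    then have "bstart \<alpha> i + \<alpha> i \<le> bstart \<alpha> j" using bstart_Suc[of i \<alpha>] bstart_mono[of "Suc i" j \<alpha>] by simp
    with \<open>v \<in> block \<alpha> i\<close> \<open>v \<in> block \<alpha> j\<close> have False unfolding block_def by auto }
  with a show False by (metis nat_neq_iff)
qed

lemma block_cover: "v < bstart \<alpha> (Suc k) \<Longrightarrow> \<exists>i\<in>{1..k}. v \<in> block \<alpha> i"
proof (induction k)
  case 0 then show ?case by (simp add: bstart_def)
next
  case (Suc k)
  show ?case
  proof (cases "v < bstart \<alpha> (Suc k)")
    case True then show ?thesis using Suc.IH by force
  next
    case False
    then have "v \<in> block \<alpha> (Suc k)" using Suc.prems bstart_Suc[of "Suc k" \<alpha>] unfolding block_def by auto
    then show ?thesis by force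
  qed
qed

lemma block_sub: "j \<in> {1..k} \<Longrightarrow> block \<alpha> j \<subseteq> {0..<nverts \<alpha> k}"
  unfolding nverts_bstart block_def using bstart_Suc[of j \<alpha>] bstart_mono[of "Suc j" "Suc k" \<alpha>] by auto

lemma verts_UN: "{0..<nverts \<alpha> k} = (\<Union>j\<in>{1..k}. block \<alpha> j)"
  using block_sub[of _ k \<alpha>] block_cover[of _ \<alpha> k] unfolding nverts_bstart by fastforce

lemma part_eq: "i \<in> {1..k} \<Longrightarrow> v \<in> block \<alpha> i \<Longrightarrow> part \<alpha> k v = i"
  unfolding part_def by (rule the_equality) (use block_disj[of i _ v \<alpha>] in auto)

lemma sum_verts: "(\<Sum>v\<in>{0..<nverts \<alpha> k}. f v) = (\<Sum>j\<in>{1..k}. \<Sum>v\<in>block \<alpha> j. f v)"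
  unfolding verts_UN
proof (rule sum.UNION_disjoint)
  show "\<forall>i\<in>{1..k}. \<forall>j\<in>{1..k}. i \<noteq> j \<longrightarrow> block \<alpha> i \<inter> block \<alpha> j = {}"
    using block_disj[of _ _ _ \<alpha>] by auto
qed (auto simp: block_def)

lemma card_block[simp]: "card (block \<alpha> i) = \<alpha> i" unfolding block_def by simp

lemma cadj_block: "i \<in> {1..k} \<Longrightarrow> j \<in> {1..k} \<Longrightarrow> u \<in> block \<alpha> i \<Longrightarrow> w \<in> block \<alpha> j \<Longrightarrow>
  cadj \<alpha> k u w = (u \<noteq> w \<and> (if i = j then odd i else even (max i j)))"
  unfolding cadj_def using part_eq[of i k u \<alpha>] part_eq[of j k w \<alpha>] by simp

definition qq :: "(nat \<Rightarrow> nat) \<Rightarrow> nat \<Rightarrow> nat \<Rightarrow> nat \<Rightarrow> real" where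
  "qq \<alpha> k i j = (if i = j then (\<Sum>l\<in>{1..k}. if l \<noteq> i \<and> even (max i l) then real (\<alpha> l) else 0)
     else if even (max i j) then - real (\<alpha> j) else 0)"

lemma sum_block_minus: "u \<in> B \<Longrightarrow> finite B \<Longrightarrow> (\<Sum>w\<in>B. if u \<noteq> w then c else 0) = (real (card B) - 1) * (c::real)"
proof -
  assume u: "u \<in> B" and f: "finite B"
  have "(\<Sum>w\<in>B. if u \<noteq> w then c else 0) = (\<Sum>w\<in>B - {u}. if u \<noteq> w then c else 0)"
    using u f by (simp add: sum.remove)
  also have "\<dots> = (\<Sum>w\<in>B - {u}. c)" by (rule sum.cong) auto
  also have "\<dots> = real (card (B - {u})) * c" by simp
  also have "card (B - {u}) = card B - 1" using u f by simp
  also have "card B \<ge> 1" using u f card_gt_0_iff[of B] by auto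
  then have "real (card B - 1) = real (card B) - 1" by (simp add: of_nat_diff)
  finally show ?thesis by simp
qed

lemma degree_block:
  assumes i: "i \<in> {1..k}" and u: "u \<in> block \<alpha> i"
  shows "real (card {w \<in> {0..<nverts \<alpha> k}. cadj \<alpha> k u w})
     = (if odd i then real (\<alpha> i) - 1 else 0) + qq \<alpha> k i i"
proof -
  have "real (card {w \<in> {0..<nverts \<alpha> k}. cadj \<alpha> k u w}) = (\<Sum>w\<in>{w \<in> {0..<nverts \<alpha> k}. cadj \<alpha> k u w}. 1)"
    by simp
  also have "\<dots> = (\<Sum>w\<in>{0..<nverts \<alpha> k}. if cadj \<alpha> k u w then 1 else 0)"
    by (rule sum.inter_filter) simp
  also have "\<dots> = (\<Sum>j\<in>{1..k}. \<Sum>w\<in>block \<alpha> j. if cadj \<alpha> k u w then 1 else 0)"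
    by (rule sum_verts)
  also have "\<dots> = (\<Sum>j\<in>{1..k}. (if j = i then (if odd i then real (\<alpha> i) - 1 else 0) else 0)
       + (if j \<noteq> i \<and> even (max i j) then real (\<alpha> j) else 0))"
  proof (rule sum.cong[OF refl])
    fix j assume j: "j \<in> {1..k}"
    have "(\<Sum>w\<in>block \<alpha> j. if cadj \<alpha> k u w then 1 else 0) =
          (\<Sum>w\<in>block \<alpha> j. if u \<noteq> w then (if i = j then (if odd i then 1 else 0) else (if even (max i j) then 1 else 0)) else (0::real))"
      by (rule sum.cong[OF refl]) (simp add: cadj_block[OF i j u])
    also have "\<dots> = (if j = i then (if odd i then real (\<alpha> i) - 1 else 0) else 0)
       + (if j \<noteq> i \<and> even (max i j) then real (\<alpha> j) else 0)"
    proof (cases "j = i")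
      case True
      then show ?thesis using sum_block_minus[OF u, of "if odd i then 1 else 0"] by (simp add: block_def)
    next
      case False
      then have "\<forall>w\<in>block \<alpha> j. u \<noteq> w" using u block_disj[of i j u \<alpha>] i j by auto
      then have "(\<Sum>w\<in>block \<alpha> j. if u \<noteq> w then (if i = j then (if odd i then 1 else 0) else (if even (max i j) then 1 else 0)) else (0::real))
         = (\<Sum>w\<in>block \<alpha> j. if even (max i j) then 1 else 0)" using False by (intro sum.cong) auto
      then show ?thesis using False by simp
    qed
    finally show "(\<Sum>w\<in>block \<alpha> j. if cadj \<alpha> k u w then 1 else 0) = (if j = i then (if odd i then real (\<alpha> i) - 1 else 0) else 0)
       + (if j \<noteq> i \<and> even (max i j) then real (\<alpha> j) else 0)" .
  qed
  also have "\<dots> = (if odd i then real (\<alpha> i) - 1 else 0) + qq \<alpha> k i i"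
    using i by (simp add: sum.distrib qq_def)
  finally show ?thesis .
qed

lemma lap_entry: "u < nverts \<alpha> k \<Longrightarrow> v < nverts \<alpha> k \<Longrightarrow> claplacian \<alpha> k $$ (u,v) =
  (if u = v then real (card {w \<in> {0..<nverts \<alpha> k}. cadj \<alpha> k u w}) else if cadj \<alpha> k u v then -1 else 0)"
  unfolding claplacian_def by simp

lemma row_sum:
  assumes i: "i \<in> {1..k}" and j: "j \<in> {1..k}" and u: "u \<in> block \<alpha> i"
  shows "(\<Sum>v\<in>block \<alpha> j. claplacian \<alpha> k $$ (u,v)) = qq \<alpha> k i j"
proof -
  have un: "u < nverts \<alpha> k" using block_sub[OF i, of \<alpha>] u by auto
  have vn: "\<And>v. v \<in> block \<alpha> j \<Longrightarrow> v < nverts \<alpha> k" using block_sub[OF j, of \<alpha>] by auto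
  show ?thesis
  proof (cases "j = i")
    case True
    have fin: "finite (block \<alpha> i)" by (simp add: block_def)
    have "(\<Sum>v\<in>block \<alpha> j. claplacian \<alpha> k $$ (u,v)) = claplacian \<alpha> k $$ (u,u) + (\<Sum>v\<in>block \<alpha> i - {u}. claplacian \<alpha> k $$ (u,v))"
      using True u fin by (simp add: sum.remove)
    also have "(\<Sum>v\<in>block \<alpha> i - {u}. claplacian \<alpha> k $$ (u,v)) = (\<Sum>v\<in>block \<alpha> i - {u}. if odd i then -1 else 0)"
      by (rule sum.cong[OF refl]) (use True vn un cadj_block[OF i i u] in \<open>auto simp: lap_entry\<close>)
    also have "\<dots> = - (if odd i then real (\<alpha> i) - 1 else 0)"
    proof -
      have c: "card (block \<alpha> i - {u}) = \<alpha> i - 1" using u fin by simp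
      have "\<alpha> i \<ge> 1" using u by (auto simp: block_def)
      then have "real (\<alpha> i - 1) = real (\<alpha> i) - 1" by (simp add: of_nat_diff)
      then show ?thesis using c by simp
    qed
    finally show ?thesis using degree_block[OF i u] un True by (simp add: lap_entry)
  next
    case False
    have "(\<Sum>v\<in>block \<alpha> j. claplacian \<alpha> k $$ (u,v)) = (\<Sum>v\<in>block \<alpha> j. if even (max i j) then -1 else 0)"
    proof (rule sum.cong[OF refl])
      fix v assume v: "v \<in> block \<alpha> j"
      have "u \<noteq> v" using block_disj[of i j u \<alpha>] i j u v False by auto
      then show "claplacian \<alpha> k $$ (u,v) = (if even (max i j) then -1 else 0)"
        using cadj_block[OF i j u v] False un vn[OF v] by (simp add: lap_entry)
    qed
    then show ?thesis using False by (simp add: qq_def)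
  qed
qed

lemma sum_shift1: "(\<Sum>l\<in>{1..k}. f l) = (\<Sum>l\<in>{0..<k}. f (Suc l))"
  by (induct k) (auto simp: atLeastLessThanSuc add.commute)

lemma bstart_in_block: "0 < \<alpha> i \<Longrightarrow> bstart \<alpha> i \<in> block \<alpha> i"
  unfolding block_def by auto

lemma cquot_eq:
  assumes pos: "\<And>i. i \<in> {1..k} \<Longrightarrow> \<alpha> i > 0"
  shows "cquot \<alpha> k = mat k k (\<lambda>(i,j). qq \<alpha> k (Suc i) (Suc j))"
  unfolding cquot_def
proof (rule eq_matI)
  fix i j assume "i < dim_row (mat k k (\<lambda>(i,j). qq \<alpha> k (Suc i) (Suc j)))" "j < dim_col (mat k k (\<lambda>(i,j). qq \<alpha> k (Suc i) (Suc j)))"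
  then have i: "i < k" and j: "j < k" by auto
  have "Suc i \<in> {1..k}" "Suc j \<in> {1..k}" using i j by auto
  then show "mat k k (\<lambda>(i, j). \<Sum>v\<in>block \<alpha> (j + 1). claplacian \<alpha> k $$ (bstart \<alpha> (i + 1), v)) $$ (i, j) =
         mat k k (\<lambda>(i, j). qq \<alpha> k (Suc i) (Suc j)) $$ (i, j)"
    using i j row_sum[of "Suc i" k "Suc j" "bstart \<alpha> (Suc i)" \<alpha>] bstart_in_block[of \<alpha> "Suc i"] pos by simp
qed auto

lemma eig_lift:
  assumes pos: "\<And>i. i \<in> {1..k} \<Longrightarrow> \<alpha> i > 0"
  and z: "\<And>j. j \<in> {1..k} \<Longrightarrow> (\<Sum>l\<in>{1..k}. qq \<alpha> k j l * z l) = \<mu> * z j"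
  and nz: "jj \<in> {1..k}" "z jj \<noteq> 0"
  shows "eigenvalue (cquot \<alpha> k) \<mu> \<and> eigenvalue (claplacian \<alpha> k) \<mu>"
proof
  define y where "y = vec k (\<lambda>j. z (Suc j))"
  have Q: "cquot \<alpha> k = mat k k (\<lambda>(i,j). qq \<alpha> k (Suc i) (Suc j))" by (rule cquot_eq[OF pos])
  have "cquot \<alpha> k *\<^sub>v y = \<mu> \<cdot>\<^sub>v y"
  proof (rule eq_vecI)
    fix i assume "i < dim_vec (\<mu> \<cdot>\<^sub>v y)"
    then have i: "i < k" by (simp add: y_def)
    have "(cquot \<alpha> k *\<^sub>v y) $ i = (\<Sum>l\<in>{0..<k}. qq \<alpha> k (Suc i) (Suc l) * z (Suc l))"
      using i by (simp add: Q y_def scalar_prod_def)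
    also have "\<dots> = (\<Sum>l\<in>{1..k}. qq \<alpha> k (Suc i) l * z l)" by (rule sum_shift1[symmetric])
    also have "\<dots> = \<mu> * z (Suc i)" using z[of "Suc i"] i by simp
    finally show "(cquot \<alpha> k *\<^sub>v y) $ i = (\<mu> \<cdot>\<^sub>v y) $ i" using i by (simp add: y_def)
  qed (simp add: Q y_def)
  moreover have "y \<noteq> 0\<^sub>v k"
  proof
    assume "y = 0\<^sub>v k"
    then have "y $ (jj - 1) = 0" using nz by auto
    moreover have "Suc (jj - 1) = jj" using nz by auto
    ultimately show False using nz by (simp add: y_def)
  qed
  ultimately show "eigenvalue (cquot \<alpha> k) \<mu>" unfolding eigenvalue_def eigenvector_def
    by (intro exI[of _ y]) (simp add: Q y_def)
next
  define n where "n = nverts \<alpha> k"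
  define x where "x = vec n (\<lambda>v. z (part \<alpha> k v))"
  have L: "claplacian \<alpha> k \<in> carrier_mat n n" by (simp add: claplacian_def n_def)
  have "claplacian \<alpha> k *\<^sub>v x = \<mu> \<cdot>\<^sub>v x"
  proof (rule eq_vecI)
    fix u assume "u < dim_vec (\<mu> \<cdot>\<^sub>v x)"
    then have u: "u < n" by (simp add: x_def)
    then obtain i where i: "i \<in> {1..k}" "u \<in> block \<alpha> i" using verts_UN[of \<alpha> k] unfolding n_def by (metis UN_E atLeastLessThan_iff zero_le)
    have "(claplacian \<alpha> k *\<^sub>v x) $ u = (\<Sum>v\<in>{0..<n}. claplacian \<alpha> k $$ (u,v) * z (part \<alpha> k v))"
      using u L by (simp add: x_def scalar_prod_def)
    also have "\<dots> = (\<Sum>j\<in>{1..k}. \<Sum>v\<in>block \<alpha> j. claplacian \<alpha> k $$ (u,v) * z (part \<alpha> k v))"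
      unfolding n_def by (rule sum_verts)
    also have "\<dots> = (\<Sum>j\<in>{1..k}. qq \<alpha> k i j * z j)"
    proof (rule sum.cong[OF refl])
      fix j assume j: "j \<in> {1..k}"
      have "(\<Sum>v\<in>block \<alpha> j. claplacian \<alpha> k $$ (u,v) * z (part \<alpha> k v)) = (\<Sum>v\<in>block \<alpha> j. claplacian \<alpha> k $$ (u,v) * z j)"
        by (rule sum.cong[OF refl]) (simp add: part_eq[OF j])
      also have "\<dots> = qq \<alpha> k i j * z j" using row_sum[OF i(1) j i(2)] by (simp add: sum_distrib_right[symmetric])
      finally show "(\<Sum>v\<in>block \<alpha> j. claplacian \<alpha> k $$ (u,v) * z (part \<alpha> k v)) = qq \<alpha> k i j * z j" .
    qed
    also have "\<dots> = \<mu> * z i" using z[OF i(1)] .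
    finally show "(claplacian \<alpha> k *\<^sub>v x) $ u = (\<mu> \<cdot>\<^sub>v x) $ u" using u part_eq[OF i] by (simp add: x_def)
  qed (use L in \<open>simp add: x_def\<close>)
  moreover have "x \<noteq> 0\<^sub>v n"
  proof
    assume "x = 0\<^sub>v n"
    moreover have b: "bstart \<alpha> jj \<in> block \<alpha> jj" using bstart_in_block pos nz by blast
    moreover have "bstart \<alpha> jj < n" using b block_sub[OF nz(1), of \<alpha>] by (auto simp: n_def)
    ultimately have "x $ bstart \<alpha> jj = 0" by auto
    then show False using nz b \<open>bstart \<alpha> jj < n\<close> part_eq[OF nz(1) b] by (simp add: x_def)
  qed
  ultimately show "eigenvalue (claplacian \<alpha> k) \<mu>" unfolding eigenvalue_def eigenvector_def
    using L by (intro exI[of _ x]) (simp add: x_def)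
qed

lemma qq_apply:
  assumes j: "j \<in> {1..k}"
  shows "(\<Sum>l\<in>{1..k}. qq \<alpha> k j l * z l) =
    (\<Sum>l\<in>{1..k}. if l \<noteq> j \<and> even (max j l) then real (\<alpha> l) * (z j - z l) else 0)"
proof -
  define D where "D = (\<Sum>l\<in>{1..k}. if l \<noteq> j \<and> even (max j l) then real (\<alpha> l) else 0)"
  have "(\<Sum>l\<in>{1..k}. qq \<alpha> k j l * z l) = (\<Sum>l\<in>{1..k}. (if l = j then D * z j else 0)
      + (if l \<noteq> j \<and> even (max j l) then - real (\<alpha> l) * z l else 0))"
    by (rule sum.cong[OF refl]) (auto simp: qq_def D_def)
  also have "\<dots> = D * z j + (\<Sum>l\<in>{1..k}. if l \<noteq> j \<and> even (max j l) then - real (\<alpha> l) * z l else 0)"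
    using j by (simp add: sum.distrib)
  also have "D * z j = (\<Sum>l\<in>{1..k}. if l \<noteq> j \<and> even (max j l) then real (\<alpha> l) * z j else 0)"
    unfolding D_def sum_distrib_right by (rule sum.cong) auto
  also have "(\<Sum>l\<in>{1..k}. if l \<noteq> j \<and> even (max j l) then real (\<alpha> l) * z j else 0)
    + (\<Sum>l\<in>{1..k}. if l \<noteq> j \<and> even (max j l) then - real (\<alpha> l) * z l else 0)
    = (\<Sum>l\<in>{1..k}. if l \<noteq> j \<and> even (max j l) then real (\<alpha> l) * (z j - z l) else 0)"
    unfolding sum.distrib[symmetric] by (rule sum.cong) (auto simp: algebra_simps)
  finally show ?thesis .
qed

definition TT :: "(nat \<Rightarrow> nat) \<Rightarrow> nat \<Rightarrow> real" where
  "TT \<alpha> p = (\<Sum>l\<in>{1..<p}. real (\<alpha> l))"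
definition EV :: "(nat \<Rightarrow> nat) \<Rightarrow> nat \<Rightarrow> nat \<Rightarrow> real" where
  "EV \<alpha> k p = (\<Sum>l\<in>{p<..k}. if even l then real (\<alpha> l) else 0)"
definition zp :: "(nat \<Rightarrow> nat) \<Rightarrow> nat \<Rightarrow> nat \<Rightarrow> real" where
  "zp \<alpha> p l = (if l < p then real (\<alpha> p) else if l = p then - TT \<alpha> p else 0)"
definition mu :: "(nat \<Rightarrow> nat) \<Rightarrow> nat \<Rightarrow> nat \<Rightarrow> real" where
  "mu \<alpha> k p = (if even p then TT \<alpha> p + real (\<alpha> p) else 0) + EV \<alpha> k p"

lemma sum_split3:
  fixes p k :: nat
  assumes p: "p \<in> {1..k}"
  shows "(\<Sum>l\<in>{1..k}. f l) = (\<Sum>l\<in>{1..<p}. f l) + f p + (\<Sum>l\<in>{p<..k}. f l)"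
proof -
  have "{1..k} = {1..<p} \<union> ({p} \<union> {p<..k})"
    using p by auto
  then have "(\<Sum>l\<in>{1..k}. f l) = (\<Sum>l\<in>{1..<p}. f l) + (\<Sum>l\<in>{p} \<union> {p<..k}. f l)"
  proof -
    have d: "{1..<p} \<inter> ({p} \<union> {p<..k}) = {}" by auto
    show ?thesis unfolding \<open>{1..k} = _\<close> by (rule sum.union_disjoint) (use d in auto)
  qed
  moreover have "(\<Sum>l\<in>{p} \<union> {p<..k}. f l) = f p + (\<Sum>l\<in>{p<..k}. f l)" by simp
  ultimately show ?thesis by (simp add: add.assoc)
qed

lemma sum_if_mult: "(\<Sum>l\<in>A. if P l then g l * c else 0) = (\<Sum>l\<in>A. if P l then g l else 0) * (c::real)"
  unfolding sum_distrib_right by (rule sum.cong) auto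

lemma zp_eigen:
  assumes p: "p \<in> {1..k}" and j: "j \<in> {1..k}"
  shows "(\<Sum>l\<in>{1..k}. if l \<noteq> j \<and> even (max j l) then real (\<alpha> l) * (zp \<alpha> p j - zp \<alpha> p l) else 0)
     = mu \<alpha> k p * zp \<alpha> p j"
  (is "(\<Sum>l\<in>{1..k}. ?F l) = _")
proof -
  have s: "(\<Sum>l\<in>{1..k}. ?F l) = (\<Sum>l\<in>{1..<p}. ?F l) + ?F p + (\<Sum>l\<in>{p<..k}. ?F l)"
    by (rule sum_split3[OF p])
  have T: "(\<Sum>l\<in>{1..<p}. real (\<alpha> l)) = TT \<alpha> p" by (simp add: TT_def)
  consider "j < p" | "j = p" | "j > p" by linarith
  then show ?thesis
  proof cases
    case 1
    have a: "(\<Sum>l\<in>{1..<p}. ?F l) = 0" by (rule sum.neutral) (use 1 in \<open>auto simp: zp_def\<close>)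
    have b: "?F p = (if even p then real (\<alpha> p) * (real (\<alpha> p) + TT \<alpha> p) else 0)" using 1 by (auto simp: zp_def)
    have c: "(\<Sum>l\<in>{p<..k}. ?F l) = (\<Sum>l\<in>{p<..k}. if even l then real (\<alpha> l) * real (\<alpha> p) else 0)"
      by (rule sum.cong[OF refl]) (use 1 in \<open>auto simp: zp_def max_def\<close>)
    show ?thesis unfolding s a b c sum_if_mult using 1 by (auto simp: mu_def EV_def zp_def algebra_simps)
  next
    case 2
    have a: "(\<Sum>l\<in>{1..<p}. ?F l) = (\<Sum>l\<in>{1..<p}. if even p then real (\<alpha> l) * (- TT \<alpha> p - real (\<alpha> p)) else 0)"
      by (rule sum.cong[OF refl]) (use 2 in \<open>auto simp: zp_def max_def\<close>)
    have a': "\<dots> = (if even p then TT \<alpha> p * (- TT \<alpha> p - real (\<alpha> p)) else 0)"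
      by (cases "even p") (simp_all add: sum_distrib_right[symmetric] TT_def)
    have b: "?F p = 0" using 2 by simp
    have c: "(\<Sum>l\<in>{p<..k}. ?F l) = (\<Sum>l\<in>{p<..k}. if even l then real (\<alpha> l) * (- TT \<alpha> p) else 0)"
      by (rule sum.cong[OF refl]) (use 2 in \<open>auto simp: zp_def max_def\<close>)
    show ?thesis unfolding s a a' b c sum_if_mult using 2 by (auto simp: mu_def EV_def zp_def TT_def algebra_simps)
  next
    case 3
    have a: "(\<Sum>l\<in>{1..<p}. ?F l) = (\<Sum>l\<in>{1..<p}. if even j then real (\<alpha> l) * (- real (\<alpha> p)) else 0)"
      by (rule sum.cong[OF refl]) (use 3 in \<open>auto simp: zp_def max_def\<close>)
    have a': "\<dots> = (if even j then TT \<alpha> p * (- real (\<alpha> p)) else 0)"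
      by (cases "even j") (simp_all add: sum_distrib_right TT_def sum_negf)
    have b: "?F p = (if even j then real (\<alpha> p) * TT \<alpha> p else 0)" using 3 by (auto simp: zp_def max_def)
    have c: "(\<Sum>l\<in>{p<..k}. ?F l) = 0"
      by (rule sum.neutral) (use 3 in \<open>auto simp: zp_def max_def\<close>)
    show ?thesis unfolding s a a' b c using 3 by (auto simp: zp_def algebra_simps)
  qed
qed

lemma eig_mu:
  assumes pos: "\<And>i. i \<in> {1..k} \<Longrightarrow> \<alpha> i > 0" and p: "p \<in> {2..k}"
  shows "eigenvalue (cquot \<alpha> k) (mu \<alpha> k p) \<and> eigenvalue (claplacian \<alpha> k) (mu \<alpha> k p)"
proof (rule eig_lift[OF pos, where z="zp \<alpha> p" and jj=1])
  fix j assume j: "j \<in> {1..k}"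
  have p1: "p \<in> {1..k}" using p by auto
  show "(\<Sum>l\<in>{1..k}. qq \<alpha> k j l * zp \<alpha> p l) = mu \<alpha> k p * zp \<alpha> p j"
    unfolding qq_apply[OF j] by (rule zp_eigen[OF p1 j])
next
  show "1 \<in> {1..k}" using p by auto
  show "zp \<alpha> p 1 \<noteq> 0" using p pos[of p] by (auto simp: zp_def)
qed

lemma eig_0:
  assumes pos: "\<And>i. i \<in> {1..k} \<Longrightarrow> \<alpha> i > 0" and k: "k \<ge> 1"
  shows "eigenvalue (cquot \<alpha> k) 0 \<and> eigenvalue (claplacian \<alpha> k) 0"
proof (rule eig_lift[OF pos, where z="\<lambda>_. 1" and jj=1])
  fix j assume j: "j \<in> {1..k}"
  show "(\<Sum>l\<in>{1..k}. qq \<alpha> k j l * 1) = 0 * 1"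
    unfolding qq_apply[OF j, of \<alpha> "\<lambda>_. 1"] by (simp add: sum.neutral)
qed (use k in auto)

lemma EV_step: "p < k \<Longrightarrow> EV \<alpha> k p = (if even (Suc p) then real (\<alpha> (Suc p)) else 0) + EV \<alpha> k (Suc p)"
proof -
  assume "p < k"
  then have "{p<..k} = insert (Suc p) {Suc p<..k}" by auto
  then show ?thesis unfolding EV_def by simp
qed

lemma EV_nonneg: "EV \<alpha> k p \<ge> 0"
  unfolding EV_def by (rule sum_nonneg) auto

lemma EV_evens: "(\<Sum>l=1..h. real (\<alpha> (2*l))) = EV \<alpha> (2*h) 0"
proof (induction h)
  case 0 then show ?case by (simp add: EV_def)
next
  case (Suc h)
  have "{0<..2 * Suc h} = insert (Suc (Suc (2*h))) (insert (Suc (2*h)) {0<..2*h})" by auto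
  then have "EV \<alpha> (2 * Suc h) 0 = real (\<alpha> (2 * Suc h)) + EV \<alpha> (2*h) 0" unfolding EV_def by simp
  then show ?case using Suc by simp
qed

lemma sum_evens_odds: fixes h :: nat shows "(\<Sum>l=1..h. f (2*l)) + (\<Sum>m=1..h. f (2*m-1)) = (\<Sum>i=1..2*h. (f i :: real))"
proof (induction h)
  case 0 then show ?case by simp
next
  case (Suc h)
  have "{1..2 * Suc h} = insert (Suc (Suc (2*h))) (insert (Suc (2*h)) {1..2*h})" by auto
  then have "(\<Sum>i=1..2 * Suc h. f i) = f (Suc (Suc (2*h))) + f (Suc (2*h)) + (\<Sum>i=1..2*h. f i)" by simp
  then show ?case using Suc by simp
qed

lemma TT_Suc: "p \<ge> 1 \<Longrightarrow> TT \<alpha> (Suc p) = TT \<alpha> p + real (\<alpha> p)"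
  unfolding TT_def using bstart_Suc[of p \<alpha>] unfolding bstart_def by simp

context
  fixes \<alpha> :: "nat \<Rightarrow> nat" and h k :: nat
  assumes kh: "k = 2*h" and h1: "h \<ge> 1"
begin

lemma kdiv: "k div 2 = h" using kh by simp

lemma L1: "clam \<alpha> k 1 = 0" by (simp add: clam_def)

lemma L2: "i \<in> {2..k div 2} \<Longrightarrow> clam \<alpha> k i = clam \<alpha> k (i-1) + real (\<alpha> (k - 2*(i-2)))"
proof -
  assume i: "i \<in> {2..k div 2}"
  show ?thesis
  proof (cases "i = 2")
    case True then show ?thesis using i by (simp add: clam_def)
  next
    case False
    then obtain j where j: "i = Suc j" "j \<ge> 2" using i by (cases i) auto
    then show ?thesis using i by (simp add: clam_def sum.cl_ivl_Suc)
  qed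
qed

lemma L3: "i \<in> {k div 2 + 1..k-1} \<Longrightarrow> clam \<alpha> k i = clam \<alpha> k (i+1) - real (\<alpha> (2*i - (k-1)))"
proof -
  assume i: "i \<in> {k div 2 + 1..k-1}"
  define t where "t = i - h"
  have t: "i = h + t" "t \<ge> 1" using i kdiv by (auto simp: t_def)
  have e1: "i - k div 2 = t" "Suc i - k div 2 = Suc t" using t kdiv by auto
  have e2: "2*i - (k-1) = 2 * Suc t - 1" using t kh h1 by auto
  have "\<not> i \<le> 1" "\<not> i \<le> k div 2" "\<not> Suc i \<le> 1" "\<not> Suc i \<le> k div 2" using t kdiv h1 by auto
  then show ?thesis unfolding clam_def using e1 e2 by (simp add: sum.cl_ivl_Suc)
qed

lemma L4: "clam \<alpha> k k = real (nverts \<alpha> k)"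
proof -
  have "\<not> k \<le> 1" "\<not> k \<le> k div 2" "k - k div 2 = h" using kh h1 by auto
  then have "clam \<alpha> k k = (\<Sum>l=1..h. real (\<alpha> (2*l))) + (\<Sum>m=1..h. real (\<alpha> (2*m-1)))"
    unfolding clam_def kdiv by simp
  also have "\<dots> = (\<Sum>i=1..k. real (\<alpha> i))" using sum_evens_odds[of "\<lambda>i. real (\<alpha> i)" h] kh by simp
  finally show ?thesis by (simp add: nverts_def)
qed

lemma M1: "2 + d \<le> h \<Longrightarrow> clam \<alpha> k (2 + d) = mu \<alpha> k (k - 2*d - 1)"
proof (induction d)
  case 0
  have "EV \<alpha> k (k - 1) = real (\<alpha> k)"
    using EV_step[of "k-1" k \<alpha>] kh h1 by (simp add: EV_def)
  moreover have "odd (k - 1)" using kh h1 by simp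
  ultimately show ?case using 0 kh by (simp add: clam_def mu_def)
next
  case (Suc d)
  have a: "clam \<alpha> k (2 + Suc d) = clam \<alpha> k (2 + d) + real (\<alpha> (k - 2*(d+1)))"
    using L2[of "2 + Suc d"] Suc.prems kdiv by simp
  define q where "q = k - 2*d - 2"
  have q: "q \<ge> 2" "even q" "k - 2*Suc d - 1 = q - 1" "Suc (q-1) = q" "Suc q = k - 2*d - 1" "q < k"
    "k - 2*(d+1) = q"
    using kh Suc.prems by (auto simp: q_def)
  have o1: "odd (k - 2 * Suc d - 1)" "odd (k - 2*d - 1)" using kh Suc.prems by auto
  have b: "EV \<alpha> k (q - 1) = real (\<alpha> q) + EV \<alpha> k q"
    using EV_step[of "q - 1" k \<alpha>] q by simp
  have c0: "EV \<alpha> k q = (if even (Suc q) then real (\<alpha> (Suc q)) else 0) + EV \<alpha> k (Suc q)"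
    by (rule EV_step) (rule q(6))
  have "\<not> even (Suc q)" using q(2) by simp
  with c0 have c: "EV \<alpha> k q = EV \<alpha> k (Suc q)" by simp
  show ?case using a b c o1 q Suc.IH Suc.prems by (simp add: mu_def)
qed

lemma M2: "Suc d \<le> h \<Longrightarrow> clam \<alpha> k (h + Suc d) = mu \<alpha> k (2 * Suc d)"
proof (induction d)
  case 0
  have "\<not> h + 1 \<le> 1" "\<not> h + 1 \<le> k div 2" "h + 1 - k div 2 = 1" using kdiv h1 by auto
  then have a: "clam \<alpha> k (h + 1) = EV \<alpha> k 0 + real (\<alpha> 1)"
    unfolding clam_def kdiv using EV_evens[of \<alpha> h] kh by simp
  have b: "EV \<alpha> k 0 = real (\<alpha> 2) + EV \<alpha> k 2"
    using EV_step[of 0 k \<alpha>] EV_step[of 1 k \<alpha>] kh h1 by (simp add: numeral_2_eq_2)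
  have c: "TT \<alpha> 2 = real (\<alpha> 1)" by (simp add: TT_def numeral_2_eq_2)
  show ?case using a b c by (simp add: mu_def)
next
  case (Suc d)
  have a: "clam \<alpha> k (h + Suc (Suc d)) = clam \<alpha> k (h + Suc d) + real (\<alpha> (Suc (Suc (Suc (2*d)))))"
  proof -
    have "h + Suc d \<in> {k div 2 + 1..k-1}" using kdiv kh Suc.prems by auto
    from L3[OF this] have "clam \<alpha> k (h + Suc d) = clam \<alpha> k (h + Suc d + 1) - real (\<alpha> (2 * (h + Suc d) - (k - 1)))" .
    moreover have "2 * (h + Suc d) - (k - 1) = Suc (Suc (Suc (2*d)))" using kh h1 by simp
    ultimately show ?thesis by simp
  qed
  have t: "TT \<alpha> (2 * Suc (Suc d)) = TT \<alpha> (2 * Suc d) + real (\<alpha> (2 * Suc d)) + real (\<alpha> (Suc (Suc (Suc (2*d)))))"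
    using TT_Suc[of "2 * Suc d" \<alpha>] TT_Suc[of "Suc (2 * Suc d)" \<alpha>] by simp
  have e: "EV \<alpha> k (2 * Suc d) = real (\<alpha> (2 * Suc (Suc d))) + EV \<alpha> k (2 * Suc (Suc d))"
    using EV_step[of "2 * Suc d" k \<alpha>] EV_step[of "Suc (2 * Suc d)" k \<alpha>] kh Suc.prems by simp
  show ?case using a t e Suc.IH Suc.prems by (simp add: mu_def)
qed

end


theorem theorem2p1:
  fixes \<alpha> :: "nat \<Rightarrow> nat" and k :: nat
  assumes "even k" and "k \<ge> 2"
    and "\<And>i. i \<in> {1..k} \<Longrightarrow> \<alpha> i > 0"
  defines "n \<equiv> nverts \<alpha> k"
    and "lam \<equiv> clam \<alpha> k"
  shows "char_poly (cquot \<alpha> k) = (\<Prod>i=1..k. [:- lam i, 1:])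
    \<and> (\<forall>i j. 1 \<le> i \<and> i \<le> j \<and> j \<le> k \<longrightarrow> lam i \<le> lam j)
    \<and> lam 1 = 0 \<and> lam k = real n
    \<and> (\<forall>i\<in>{2..k div 2}. lam i = lam (i-1) + real (\<alpha> (k - 2*(i-2))))
    \<and> (\<forall>i\<in>{k div 2 + 1..k-1}. lam i = lam (i+1) - real (\<alpha> (2*i - (k-1))))
    \<and> (\<forall>i\<in>{1..k}. eigenvalue (claplacian \<alpha> k) (lam i))"
proof -
  note pos = assms(3)
  obtain h where kh: "k = 2*h" using assms(1) by blast
  have h1: "h \<ge> 1" using kh assms(2) by simp
  have kd: "k div 2 = h" using kh by simp
  have apos: "\<And>i. i \<in> {1..k} \<Longrightarrow> real (\<alpha> i) > 0" using pos by simp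
  have R2: "\<forall>i\<in>{2..k div 2}. lam i = lam (i-1) + real (\<alpha> (k - 2*(i-2)))"
    using L2[OF kh h1] unfolding lam_def by blast
  have R3: "\<forall>i\<in>{k div 2 + 1..k-1}. lam i = lam (i+1) - real (\<alpha> (2*i - (k-1)))"
    using L3[OF kh h1] unfolding lam_def by blast
  have l1: "lam 1 = 0" unfolding lam_def by (rule L1[OF kh h1])
  have lk: "lam k = real n" unfolding lam_def n_def by (rule L4[OF kh h1])
  have EVAL: "\<forall>i\<in>{1..k}. eigenvalue (cquot \<alpha> k) (lam i) \<and> eigenvalue (claplacian \<alpha> k) (lam i)"
  proof
    fix i assume i: "i \<in> {1..k}"
    consider "i = 1" | "2 \<le> i" "i \<le> h" | "h < i" using i unfolding atLeastAtMost_iff by linarith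
    then show "eigenvalue (cquot \<alpha> k) (lam i) \<and> eigenvalue (claplacian \<alpha> k) (lam i)"
    proof cases
      case 1 then show ?thesis using eig_0[OF pos] l1 assms(2) by simp
    next
      case 2
      define d where "d = i - 2"
      have i2: "i = 2 + d" using 2 by (simp add: d_def)
      have "lam i = mu \<alpha> k (k - 2*d - 1)" unfolding lam_def i2 by (rule M1[OF kh h1]) (use 2 i2 in simp)
      moreover have "k - 2*d - 1 \<in> {2..k}" using 2 i2 kh by auto
      ultimately show ?thesis using eig_mu[OF pos] by simp
    next
      case 3
      define d where "d = i - h - 1"
      have i2: "i = h + Suc d" using 3 by (simp add: d_def)
      have "lam i = mu \<alpha> k (2 * Suc d)" unfolding lam_def i2 by (rule M2[OF kh h1]) (use i i2 kh in simp)
      moreover have "2 * Suc d \<in> {2..k}" using i i2 kh by auto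
      ultimately show ?thesis using eig_mu[OF pos] by simp
    qed
  qed
  have step: "\<And>i. 1 \<le> i \<Longrightarrow> i < k \<Longrightarrow> lam i < lam (Suc i)"
  proof -
    fix i assume i: "1 \<le> i" "i < k"
    consider "Suc i \<le> h" | "i = h" | "h < i" by linarith
    then show "lam i < lam (Suc i)"
    proof cases
      case 1
      have "Suc i \<in> {2..k div 2}" using 1 i kd by auto
      with R2 have "lam (Suc i) = lam i + real (\<alpha> (k - 2*(Suc i - 2)))" by auto
      moreover have "k - 2*(Suc i - 2) \<in> {1..k}" using 1 i kh by auto
      ultimately show ?thesis using apos by fastforce
    next
      case 3
      have "i \<in> {k div 2 + 1..k-1}" using 3 i kd by auto
      with R3 have "lam i = lam (i+1) - real (\<alpha> (2*i - (k-1)))" by auto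
      moreover have "2*i - (k-1) \<in> {1..k}" using 3 i kh by auto
      ultimately show ?thesis using apos by fastforce
    next
      case 2
      have m2: "lam (Suc h) = mu \<alpha> k 2" using M2[OF kh h1, where d=0] h1 unfolding lam_def by simp
      have mu2: "mu \<alpha> k 2 = TT \<alpha> 2 + real (\<alpha> 2) + EV \<alpha> k 2" by (simp add: mu_def)
      have a2: "real (\<alpha> 2) > 0" using apos[of 2] assms(2) by simp
      have T2: "TT \<alpha> 2 \<ge> 0" unfolding TT_def by (rule sum_nonneg) simp
      show ?thesis
      proof (cases "h = 1")
        case True
        then show ?thesis using 2 m2 mu2 a2 T2 EV_nonneg[of \<alpha> k 2] l1 by simp
      next
        case False
        then have h2: "h \<ge> 2" using h1 by simp
        have hh: "2 + (h - 2) = h" using h2 by simp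
        have "lam h = mu \<alpha> k (k - 2*(h-2) - 1)" using M1[OF kh h1, where d="h-2" and \<alpha>=\<alpha>] h2 unfolding lam_def hh by simp
        moreover have "k - 2*(h-2) - 1 = 3" using kh h2 by simp
        ultimately have "lam h = mu \<alpha> k 3" by metis
        moreover have "mu \<alpha> k 3 = EV \<alpha> k 3" by (simp add: mu_def)
        ultimately have m3: "lam h = EV \<alpha> k 3" by simp
        have "EV \<alpha> k 2 = EV \<alpha> k 3" using EV_step[of 2 k \<alpha>] kh h2 by (simp add: numeral_3_eq_3)
        then show ?thesis using 2 m2 mu2 a2 T2 m3 by simp
      qed
    qed
  qed
  have strict: "\<And>i j. 1 \<le> i \<Longrightarrow> i < j \<Longrightarrow> j \<le> k \<Longrightarrow> lam i < lam j"
  proof -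
    fix i j :: nat assume ij: "1 \<le> i" "i < j" "j \<le> k"
    then show "lam i < lam j"
    proof (induction j)
      case 0 then show ?case by simp
    next
      case (Suc j)
      show ?case
      proof (cases "i = j")
        case True then show ?thesis using step Suc.prems by simp
      next
        case False
        then have "lam i < lam j" using Suc by simp
        also have "lam j < lam (Suc j)" using step Suc.prems False by simp
        finally show ?thesis .
      qed
    qed
  qed
  have mono: "\<forall>i j. 1 \<le> i \<and> i \<le> j \<and> j \<le> k \<longrightarrow> lam i \<le> lam j"
    using strict by (metis order.order_iff_strict order.refl)
  have inj: "inj_on lam {1..k}"
  proof (rule inj_onI)
    fix i j assume "i \<in> {1..k}" "j \<in> {1..k}" "lam i = lam j"
    then show "i = j" using strict[of i j] strict[of j i] by (cases i j rule: linorder_cases) auto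
  qed
  have Qc: "cquot \<alpha> k \<in> carrier_mat k k" by (simp add: cquot_def)
  define P where "P = (\<Prod>i=1..k. [:- lam i, 1:])"
  have degP: "degree P = k"
    unfolding P_def by (subst degree_prod_eq_sum_degree) auto
  have lcP: "coeff P k = 1"
  proof -
    have "lead_coeff P = 1" unfolding P_def lead_coeff_prod by simp
    then show ?thesis using degP by simp
  qed
  have CP: "char_poly (cquot \<alpha> k) = P"
  proof (rule poly_eqI_degree_lead_coeff[where n = k and A = "lam ` {1..k}"])
    show "coeff (char_poly (cquot \<alpha> k)) k = coeff P k" using degree_monic_char_poly[OF Qc] lcP by simp
    show "k \<le> card (lam ` {1..k})" using card_image[OF inj] by simp
    show "degree (char_poly (cquot \<alpha> k)) \<le> k" using degree_monic_char_poly[OF Qc] by simp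
    show "degree P \<le> k" using degP by simp
  next
    fix z assume "z \<in> lam ` {1..k}"
    then obtain i where i: "i \<in> {1..k}" "z = lam i" by auto
    have "poly (char_poly (cquot \<alpha> k)) z = 0"
      using EVAL i eigenvalue_root_char_poly[OF Qc] by auto
    moreover have "poly P z = 0" unfolding P_def poly_prod using i by (intro prod_zero) auto
    ultimately show "poly (char_poly (cquot \<alpha> k)) z = poly P z" by simp
  qed
  show ?thesis using CP mono l1 lk R2 R3 EVAL unfolding P_def by blast
qed

end
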